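(* Fix $\epsilon>0$. For $x\in X$ define $g_\epsilon(x)=\sum_{n=0}^\infty e^{-n\epsilon}\mu_n(x)$ if $\lambda_*(x)=0$, and $g_\epsilon(x)=1$ otherwise; write $g^\alpha_\epsilon=g_\epsilon|_{X_\alpha}$. Then for every $x\in X_\alpha$ with $\lambda_*(x)=0$ and every plaque chain $\mathcal{Q}=\{P_\alpha(x),P_\beta(y)\}$ of length one, $$e^{-\epsilon}g^\alpha_\epsilon(x)\le g^\beta_\epsilon(y)\cdot h_{\mathcal{Q}}'(x)\le e^{\epsilon}g^\alpha_\epsilon(x).$$
   Context: $M$ is a closed Riemannian manifold with a codimension-one $C^1$-foliation with oriented normal bundle; fix a finite regular atlas of transversally orientation-preserving charts $\varphi_\alpha\colon U_\alpha\to(-1,1)^n\times(-1,1)$ with transverse coordinate spaces $X_\alpha=(-1,1)$ and $X$ their disjoint union; $P_\alpha(x)$ is the plaque with transverse coordinate $x$; transition maps $h_{\beta\alpha}$ send $x$ to $y$ when $P_\alpha(x)\cap P_\beta(y)\ne\emptyset$; for a plaque chain $\mathcal{P}$ (sequence of plaques with consecutive ones intersecting) of length $\|\mathcal{P}\|$ (number of plaques minus one), $h_{\mathcal{P}}$ is the composition of transition maps on its maximal connected domain $D_{\mathcal{P}}$. $\mu_0(x)=1$, $\mu_n(x)=\sup\{h'_{\mathcal{P}}(x):x\in D_{\mathcal{P}},\|\mathcal{P}\|\le n\}$, and $\lambda_*(x)=\limsup_n\frac1n\log\mu_n(x)\ge0$; the series defining $g_\epsilon$ converges when $\lambda_*(x)=0$,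 and $\lambda_*$ is constant on holonomy orbits. *)

theory Defs
  imports "HOL-Analysis.Analysis" "HOL-Library.Liminf_Limsup"
begin

text \<open>Charts phi a : U a -> (-1,1)^n x (-1,1); the last coordinate is the transverse one.\<close>

definition cube :: "(real^'n) set" where
  "cube = {v. \<forall>k. \<bar>v $ k\<bar> < 1}"

definition plaque :: "('i \<Rightarrow> 'm set) \<Rightarrow> ('i \<Rightarrow> 'm \<Rightarrow> (real^'n) \<times> real) \<Rightarrow> 'i \<Rightarrow> real \<Rightarrow> 'm set" where
  "plaque U \<phi> a x = {p \<in> U a. snd (\<phi> a p) = x}"

definition plaque_meets :: "('i \<Rightarrow> 'm set) \<Rightarrow> ('i \<Rightarrow> 'm \<Rightarrow> (real^'n) \<times> real) \<Rightarrow> 'i \<Rightarrow> real \<Rightarrow> 'i \<Rightarrow> real \<Rightarrow> bool" where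
  "plaque_meets U \<phi> a x b y \<longleftrightarrow> plaque U \<phi> a x \<inter> plaque U \<phi> b y \<noteq> {}"

text \<open>The rest is expressed in terms of an abstract meeting relation R (instantiated
  with plaque_meets). Domain and transition map h_{ba}: x maps to y when P_a(x) meets P_b(y).\<close>

definition tdom :: "('i \<Rightarrow> real \<Rightarrow> 'i \<Rightarrow> real \<Rightarrow> bool) \<Rightarrow> 'i \<Rightarrow> 'i \<Rightarrow> real set" where
  "tdom R b a = {x. -1 < x \<and> x < 1 \<and> (\<exists>y. R a x b y)}"

definition htrans :: "('i \<Rightarrow> real \<Rightarrow> 'i \<Rightarrow> real \<Rightarrow> bool) \<Rightarrow> 'i \<Rightarrow> 'i \<Rightarrow> real \<Rightarrow> real" where
  "htrans R b a x = (THE y. R a x b y)"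

definition regular_foliated_atlas ::
  "'m set \<Rightarrow> 'i set \<Rightarrow> ('i \<Rightarrow> 'm set) \<Rightarrow> ('i \<Rightarrow> 'm \<Rightarrow> (real^'n) \<times> real) \<Rightarrow> bool" where
  "regular_foliated_atlas M I U \<phi> \<longleftrightarrow>
     finite I \<and> I \<noteq> {} \<and> (\<Union>a\<in>I. U a) = M \<and>
     (\<forall>a\<in>I. U a \<subseteq> M \<and> bij_betw (\<phi> a) (U a) (cube \<times> {-1<..<1})) \<and>
     \<comment> \<open>regularity: a plaque meets at most one plaque of another chart\<close>
     (\<forall>a\<in>I. \<forall>b\<in>I. \<forall>x y y'. plaque_meets U \<phi> a x b y \<longrightarrow> plaque_meets U \<phi> a x b y' \<longrightarrow> y = y') \<and>
     \<comment> \<open>transition maps are C^1, transversally orientation preserving, with derivatives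
         bounded away from 0 and infinity (they extend to the closure of their domains)\<close>
     (\<exists>C>0. \<forall>a\<in>I. \<forall>b\<in>I.
        open (tdom (plaque_meets U \<phi>) b a) \<and>
        (\<exists>h'. continuous_on (tdom (plaque_meets U \<phi>) b a) h' \<and>
           (\<forall>x\<in>tdom (plaque_meets U \<phi>) b a.
              (htrans (plaque_meets U \<phi>) b a has_real_derivative h' x) (at x) \<and>
              1 / C \<le> h' x \<and> h' x \<le> C)))"

text \<open>A plaque chain is a nonempty list of plaques (chart index, transverse coordinate),
  consecutive ones intersecting. Its length is the number of plaques minus one.\<close>

definition plaque_chain :: "'i set \<Rightarrow> ('i \<Rightarrow> real \<Rightarrow> 'i \<Rightarrow> real \<Rightarrow> bool) \<Rightarrow> ('i \<times> real) list \<Rightarrow> bool" where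
  "plaque_chain I R ps \<longleftrightarrow> ps \<noteq> [] \<and>
     (\<forall>p\<in>set ps. fst p \<in> I \<and> -1 < snd p \<and> snd p < 1) \<and>
     (\<forall>i. Suc i < length ps \<longrightarrow> R (fst (ps ! i)) (snd (ps ! i)) (fst (ps ! Suc i)) (snd (ps ! Suc i)))"

definition chain_length :: "('i \<times> real) list \<Rightarrow> nat" where
  "chain_length ps = length ps - 1"

fun hcomp :: "('i \<Rightarrow> real \<Rightarrow> 'i \<Rightarrow> real \<Rightarrow> bool) \<Rightarrow> ('i \<times> real) list \<Rightarrow> real \<Rightarrow> real" where
  "hcomp R (p # q # ps) x = hcomp R (q # ps) (htrans R (fst q) (fst p) x)"
| "hcomp R _ x = x"

fun cdom :: "('i \<Rightarrow> real \<Rightarrow> 'i \<Rightarrow> real \<Rightarrow> bool) \<Rightarrow> ('i \<times> real) list \<Rightarrow> real set" where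
  "cdom R (p # q # ps) = {x \<in> tdom R (fst q) (fst p). htrans R (fst q) (fst p) x \<in> cdom R (q # ps)}"
| "cdom R _ = {-1<..<1}"

definition chain_dom :: "('i \<Rightarrow> real \<Rightarrow> 'i \<Rightarrow> real \<Rightarrow> bool) \<Rightarrow> ('i \<times> real) list \<Rightarrow> real set" where
  "chain_dom R ps = connected_component_set (cdom R ps) (snd (hd ps))"

text \<open>Points of X (disjoint union of the X_a) are pairs (a, x).\<close>
definition mu :: "'i set \<Rightarrow> ('i \<Rightarrow> real \<Rightarrow> 'i \<Rightarrow> real \<Rightarrow> bool) \<Rightarrow> nat \<Rightarrow> 'i \<times> real \<Rightarrow> real" where
  "mu I R n p = (if n = 0 then 1 else
     Sup {deriv (hcomp R ps) (snd p) | ps. plaque_chain I R ps \<and> fst (hd ps) = fst p \<and>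
            snd p \<in> chain_dom R ps \<and> chain_length ps \<le> n})"

definition lambda_star :: "'i set \<Rightarrow> ('i \<Rightarrow> real \<Rightarrow> 'i \<Rightarrow> real \<Rightarrow> bool) \<Rightarrow> 'i \<times> real \<Rightarrow> ereal" where
  "lambda_star I R p = limsup (\<lambda>n. ereal (ln (mu I R n p) / real n))"

definition g_eps :: "'i set \<Rightarrow> ('i \<Rightarrow> real \<Rightarrow> 'i \<Rightarrow> real \<Rightarrow> bool) \<Rightarrow> real \<Rightarrow> 'i \<times> real \<Rightarrow> real" where
  "g_eps I R \<epsilon> p = (if lambda_star I R p = 0
      then (\<Sum>n. exp (- real n * \<epsilon>) * mu I R n p) else 1)"

end

theory Submission
  imports Defs
begin

locale csys =
  fixes I :: "'i set" and R :: "'i \<Rightarrow> real \<Rightarrow> 'i \<Rightarrow> real \<Rightarrow> bool" and C :: real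
  assumes rng: "\<And>a u b v. a \<in> I \<Longrightarrow> R a u b v \<Longrightarrow> -1 < u \<and> u < 1"
    and sym: "\<And>a u b v. R a u b v \<Longrightarrow> R b v a u"
    and reg: "\<And>a b x y y'. a \<in> I \<Longrightarrow> b \<in> I \<Longrightarrow> R a x b y \<Longrightarrow> R a x b y' \<Longrightarrow> y = y'"
    and C1: "C \<ge> 1"
    and opn: "\<And>a b. a \<in> I \<Longrightarrow> b \<in> I \<Longrightarrow> open (tdom R b a)"
    and der: "\<And>a b x. a \<in> I \<Longrightarrow> b \<in> I \<Longrightarrow> x \<in> tdom R b a \<Longrightarrow>
        \<exists>D. (htrans R b a has_real_derivative D) (at x) \<and> 1/C \<le> D \<and> D \<le> C"
begin

lemma htrans_eq: "a \<in> I \<Longrightarrow> b \<in> I \<Longrightarrow> R a u b v \<Longrightarrow> htrans R b a u = v"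
  unfolding htrans_def by (rule the_equality) (auto dest: reg)

lemma tdom_I: "a \<in> I \<Longrightarrow> R a u b v \<Longrightarrow> u \<in> tdom R b a"
  unfolding tdom_def using rng by blast

lemma hcomp_cons2: "hcomp R (p # q # ps) = (\<lambda>z. hcomp R (q # ps) (htrans R (fst q) (fst p) z))"
  by (rule ext) simp

lemma hcomp_single: "hcomp R [p] = (\<lambda>z. z)"
  by (rule ext) simp

lemma hcomp_deriv:
  "set (map fst ps) \<subseteq> I \<Longrightarrow> x \<in> cdom R ps \<Longrightarrow>
    \<exists>D. (hcomp R ps has_real_derivative D) (at x) \<and> 0 < D \<and> D \<le> C ^ (length ps - 1)"
proof (induction ps arbitrary: x)
  case Nil
  have "hcomp R [] = (\<lambda>z. z)" by (rule ext) simp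
  then show ?case by (auto intro!: exI[of _ 1] DERIV_ident)
next
  case (Cons p ps)
  show ?case
  proof (cases ps)
    case Nil
    then show ?thesis by (auto simp: hcomp_single intro!: exI[of _ 1] DERIV_ident)
  next
    case (Cons q qs)
    let ?h = "htrans R (fst q) (fst p)"
    have xd: "x \<in> tdom R (fst q) (fst p)" and hx: "?h x \<in> cdom R ps"
      using Cons.prems Cons by auto
    have I: "fst p \<in> I" "fst q \<in> I" "set (map fst ps) \<subseteq> I" using Cons.prems Cons by auto
    obtain D1 where D1: "(hcomp R ps has_real_derivative D1) (at (?h x))" "0 < D1" "D1 \<le> C ^ (length ps - 1)"
      using Cons.IH[OF I(3) hx] by blast
    obtain D2 where D2: "(?h has_real_derivative D2) (at x)" "1/C \<le> D2" "D2 \<le> C"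
      using der[OF I(1,2) xd] by blast
    have "0 < 1/C" using C1 by simp
    hence D2p: "0 < D2" using D2 by linarith
    have "((\<lambda>z. hcomp R ps (?h z)) has_real_derivative D1 * D2) (at x)"
      by (rule DERIV_chain2[OF D1(1) D2(1)])
    moreover have "D1 * D2 \<le> C ^ (length ps - 1) * C"
      using D1 D2 D2p by (intro mult_mono) auto
    moreover have "C ^ (length ps - 1) * C = C ^ (length (p # ps) - 1)"
      using Cons by simp
    ultimately show ?thesis using hcomp_cons2[of p q qs] Cons D1 D2p
      by (intro exI[of _ "D1*D2"]) (auto simp: mult_ac)
  qed
qed

lemma cdom_fst: "map fst ps = map fst qs \<Longrightarrow> cdom R ps = cdom R qs"
proof (induction ps arbitrary: qs)
  case Nil then show ?case by simp
next
  case (Cons p ps)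
  then obtain p' qs' where qs: "qs = p' # qs'" "fst p' = fst p" "map fst ps = map fst qs'"
    by (cases qs) auto
  show ?case
  proof (cases ps)
    case Nil then show ?thesis using qs by simp
  next
    case (Cons q qs2)
    then obtain q' qs3 where "qs' = q' # qs3" "fst q' = fst q" using qs by (cases qs') auto
    then show ?thesis using Cons qs Cons.IH[OF qs(3)] by simp
  qed
qed

lemma hcomp_fst: "map fst ps = map fst qs \<Longrightarrow> hcomp R ps = hcomp R qs"
proof (induction ps arbitrary: qs)
  case Nil then show ?case by (cases qs) (auto intro!: ext)
next
  case (Cons p ps)
  then obtain p' qs' where qs: "qs = p' # qs'" "fst p' = fst p" "map fst ps = map fst qs'"
    by (cases qs) auto
  show ?case
  proof (cases ps)
    case Nil then show ?thesis using qs by (auto intro!: ext)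
  next
    case (Cons q qs2)
    then obtain q' qs3 where "qs' = q' # qs3" "fst q' = fst q" using qs by (cases qs') auto
    then show ?thesis using Cons qs Cons.IH[OF qs(3)] by (simp add: hcomp_cons2)
  qed
qed

fun orbit :: "'i list \<Rightarrow> real \<Rightarrow> ('i \<times> real) list" where
  "orbit [] u = []"
| "orbit [a] u = [(a, u)]"
| "orbit (a # b # cs) u = (a, u) # orbit (b # cs) (htrans R b a u)"

lemma orbit_fst: "map fst (orbit cs u) = cs"
  by (induction cs u rule: orbit.induct) auto

lemma orbit_hd: "cs \<noteq> [] \<Longrightarrow> hd (orbit cs u) = (hd cs, u)"
  by (induction cs u rule: orbit.induct) auto

lemma plaque_chain_cons2:
  "plaque_chain I R (p # q # ps) \<longleftrightarrow> fst p \<in> I \<and> -1 < snd p \<and> snd p < 1 \<and>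
     R (fst p) (snd p) (fst q) (snd q) \<and> plaque_chain I R (q # ps)"
  unfolding plaque_chain_def
  apply (auto simp: nth_Cons split: nat.splits)
  done

lemma plaque_chain_single: "plaque_chain I R [p] \<longleftrightarrow> fst p \<in> I \<and> -1 < snd p \<and> snd p < 1"
  unfolding plaque_chain_def by auto

lemma orbit_chain:
  "cs \<noteq> [] \<Longrightarrow> set cs \<subseteq> I \<Longrightarrow> u \<in> cdom R (orbit cs u) \<Longrightarrow> plaque_chain I R (orbit cs u)"
proof (induction cs u rule: orbit.induct)
  case (1 u) then show ?case by simp
next
  case (2 a u) then show ?case by (simp add: plaque_chain_single)
next
  case (3 a b cs u)
  let ?v = "htrans R b a u"
  have o: "orbit (b # cs) ?v = (b, ?v) # tl (orbit (b # cs) ?v)" by (cases cs) auto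
  have I: "a \<in> I" "b \<in> I" "set (b # cs) \<subseteq> I" using 3 by auto
  have c: "u \<in> cdom R ((a, u) # (b, ?v) # tl (orbit (b # cs) ?v))" using 3(4) o by simp
  hence ud: "u \<in> tdom R b a" by simp
  from c have "?v \<in> cdom R ((b, ?v) # tl (orbit (b # cs) ?v))" by simp
  hence vd: "?v \<in> cdom R (orbit (b # cs) ?v)" by (simp only: o[symmetric])
  from ud obtain v where Ruv: "R a u b v" unfolding tdom_def by blast
  have "?v = v" using htrans_eq[OF I(1,2) Ruv] .
  hence Ruv': "R a u b ?v" using Ruv by simp
  have ch: "plaque_chain I R (orbit (b # cs) ?v)" using 3(1)[OF _ I(3) vd] by simp
  show ?case using ch Ruv' rng[OF I(1) Ruv] I(1)
    by (subst orbit.simps, subst o, subst plaque_chain_cons2, subst (asm) o) simp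
qed

definition Tset :: "nat \<Rightarrow> 'i \<Rightarrow> real \<Rightarrow> real set" where
  "Tset n a u = {deriv (hcomp R ps) u | ps. ps \<noteq> [] \<and> set (map fst ps) \<subseteq> I \<and> fst (hd ps) = a \<and>
      u \<in> cdom R ps \<and> length ps \<le> Suc n}"

lemma deriv_id': "deriv (\<lambda>z::real. z) u = 1"
  by (rule DERIV_imp_deriv) (rule DERIV_ident)

lemma T_one: "a \<in> I \<Longrightarrow> -1 < u \<Longrightarrow> u < 1 \<Longrightarrow> 1 \<in> Tset n a u"
  unfolding Tset_def
  by (rule CollectI, rule exI[of _ "[(a, u)]"]) (simp add: hcomp_single deriv_id')

lemma T_bdd: "d \<in> Tset n a u \<Longrightarrow> 0 < d \<and> d \<le> C ^ n"
proof -
  assume "d \<in> Tset n a u"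
  then obtain ps where ps: "d = deriv (hcomp R ps) u" "ps \<noteq> []" "set (map fst ps) \<subseteq> I"
    "u \<in> cdom R ps" "length ps \<le> Suc n" unfolding Tset_def by blast
  obtain D where D: "(hcomp R ps has_real_derivative D) (at u)" "0 < D" "D \<le> C ^ (length ps - 1)"
    using hcomp_deriv[OF ps(3,4)] by blast
  have "C ^ (length ps - 1) \<le> C ^ n" using C1 ps(5) by (intro power_increasing) auto
  then show ?thesis using D DERIV_imp_deriv[OF D(1)] ps(1) by simp
qed

lemma T0: "a \<in> I \<Longrightarrow> -1 < u \<Longrightarrow> u < 1 \<Longrightarrow> Tset 0 a u = {1}"
proof
  assume "a \<in> I" "-1 < u" "u < 1"
  then show "{1} \<subseteq> Tset 0 a u" using T_one by auto
  show "Tset 0 a u \<subseteq> {1}"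
  proof
    fix d assume "d \<in> Tset 0 a u"
    then obtain ps where ps: "d = deriv (hcomp R ps) u" "ps \<noteq> []" "length ps \<le> 1"
      unfolding Tset_def by auto
    then obtain p where "ps = [p]" by (cases ps) auto
    then show "d \<in> {1}" using ps by (simp add: hcomp_single deriv_id')
  qed
qed

lemma mu_T: "a \<in> I \<Longrightarrow> -1 < u \<Longrightarrow> u < 1 \<Longrightarrow> mu I R n (a, u) = Sup (Tset n a u)"
proof -
  assume a: "a \<in> I" "-1 < u" "u < 1"
  show ?thesis
  proof (cases "n = 0")
    case True then show ?thesis using T0[OF a] by (simp add: mu_def)
  next
    case False
    have "{deriv (hcomp R ps) (snd (a, u)) | ps. plaque_chain I R ps \<and> fst (hd ps) = fst (a, u) \<and>
            snd (a, u) \<in> chain_dom R ps \<and> chain_length ps \<le> n} = Tset n a u"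
    proof (intro equalityI subsetI)
      fix d assume "d \<in> {deriv (hcomp R ps) (snd (a, u)) | ps. plaque_chain I R ps \<and> fst (hd ps) = fst (a, u) \<and>
            snd (a, u) \<in> chain_dom R ps \<and> chain_length ps \<le> n}"
      then obtain ps where ps: "d = deriv (hcomp R ps) u" "plaque_chain I R ps" "fst (hd ps) = a"
        "u \<in> chain_dom R ps" "chain_length ps \<le> n" by auto
      have "u \<in> cdom R ps" using ps(4) connected_component_subset unfolding chain_dom_def by blast
      moreover have "ps \<noteq> []" "set (map fst ps) \<subseteq> I" using ps(2) unfolding plaque_chain_def by auto
      moreover have "length ps \<le> Suc n" using ps(5) unfolding chain_length_def by simp
      ultimately show "d \<in> Tset n a u" unfolding Tset_def using ps by blast
    next
      fix d assume "d \<in> Tset n a u"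
      then obtain ps where ps: "d = deriv (hcomp R ps) u" "ps \<noteq> []" "set (map fst ps) \<subseteq> I"
        "fst (hd ps) = a" "u \<in> cdom R ps" "length ps \<le> Suc n" unfolding Tset_def by blast
      define qs where "qs = orbit (map fst ps) u"
      have mf: "map fst qs = map fst ps" unfolding qs_def by (rule orbit_fst)
      have cd: "cdom R qs = cdom R ps" using cdom_fst[OF mf] .
      have hc: "hcomp R qs = hcomp R ps" using hcomp_fst[OF mf] .
      have ne: "map fst ps \<noteq> []" using ps(2) by simp
      have ch: "plaque_chain I R qs" unfolding qs_def
        using orbit_chain[OF ne] ps(3) ps(5) cd unfolding qs_def by simp
      have hq: "hd qs = (a, u)" unfolding qs_def using orbit_hd[OF ne] ps(2,4) by (simp add: hd_map)
      have "length qs = length ps" using arg_cong[OF mf, of length] by simp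
      hence "chain_length qs \<le> n" using ps(6) unfolding chain_length_def by simp
      moreover have "u \<in> chain_dom R qs" unfolding chain_dom_def using hq cd ps(5) by simp
      ultimately show "d \<in> {deriv (hcomp R ps) (snd (a, u)) | ps. plaque_chain I R ps \<and> fst (hd ps) = fst (a, u) \<and>
            snd (a, u) \<in> chain_dom R ps \<and> chain_length ps \<le> n}"
        using ch hq hc ps(1) by (intro CollectI exI[of _ qs]) simp
    qed
    then show ?thesis using False by (simp add: mu_def)
  qed
qed

lemma hder: "a \<in> I \<Longrightarrow> b \<in> I \<Longrightarrow> x \<in> tdom R b a \<Longrightarrow>
   (htrans R b a has_real_derivative deriv (htrans R b a) x) (at x) \<and>
   1/C \<le> deriv (htrans R b a) x \<and> deriv (htrans R b a) x \<le> C"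
  using der[of a b x] DERIV_imp_deriv by metis

lemma inv_deriv:
  assumes I: "a \<in> I" "b \<in> I" and Rxy: "R a x b y"
  shows "deriv (htrans R a b) y * deriv (htrans R b a) x = 1"
proof -
  have xd: "x \<in> tdom R b a" using tdom_I[OF I(1) Rxy] .
  have yd: "y \<in> tdom R a b" using tdom_I[OF I(2) sym[OF Rxy]] .
  have hx: "htrans R b a x = y" using htrans_eq[OF I Rxy] .
  have D1: "(htrans R a b has_real_derivative deriv (htrans R a b) y) (at (htrans R b a x))"
    using hder[OF I(2,1) yd] hx by simp
  have D2: "(htrans R b a has_real_derivative deriv (htrans R b a) x) (at x)"
    using hder[OF I xd] by simp
  have c: "((\<lambda>z. htrans R a b (htrans R b a z)) has_real_derivative
      deriv (htrans R a b) y * deriv (htrans R b a) x) (at x)"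
    by (rule DERIV_chain2[OF D1 D2])
  have "((\<lambda>z. htrans R a b (htrans R b a z)) has_real_derivative 1) (at x)"
  proof (rule has_field_derivative_transform_within_open[OF DERIV_ident opn[OF I] xd])
    fix z assume "z \<in> tdom R b a"
    then obtain w where Rzw: "R a z b w" unfolding tdom_def by blast
    have "htrans R b a z = w" using htrans_eq[OF I Rzw] .
    moreover have "htrans R a b w = z" using htrans_eq[OF I(2,1) sym[OF Rzw]] .
    ultimately show "z = htrans R a b (htrans R b a z)" by simp
  qed
  then show ?thesis using DERIV_unique[OF c] by simp
qed

lemma T_prepend:
  assumes I: "a \<in> I" "b \<in> I" and Rxy: "R a x b y" and d: "d \<in> Tset n b y"
  shows "d * deriv (htrans R b a) x \<in> Tset (Suc n) a x"
proof -
  obtain ps where ps: "d = deriv (hcomp R ps) y" "ps \<noteq> []" "set (map fst ps) \<subseteq> I"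
    "fst (hd ps) = b" "y \<in> cdom R ps" "length ps \<le> Suc n" using d unfolding Tset_def by blast
  obtain q qs where pq: "ps = q # qs" using ps(2) by (cases ps) auto
  have fq: "fst q = b" using ps(4) pq by simp
  have xd: "x \<in> tdom R b a" using tdom_I[OF I(1) Rxy] .
  have hx: "htrans R b a x = y" using htrans_eq[OF I Rxy] .
  have cd: "x \<in> cdom R ((a, x) # ps)" using xd hx ps(5) pq fq by simp
  obtain D where D: "(hcomp R ps has_real_derivative D) (at y)"
    using hcomp_deriv[OF ps(3,5)] by blast
  have D2: "(htrans R b a has_real_derivative deriv (htrans R b a) x) (at x)"
    using hder[OF I xd] by simp
  have "((\<lambda>z. hcomp R ps (htrans R b a z)) has_real_derivative D * deriv (htrans R b a) x) (at x)"
    using DERIV_chain2[OF _ D2, of "hcomp R ps" D] D hx by simp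
  moreover have "hcomp R ((a, x) # ps) = (\<lambda>z. hcomp R ps (htrans R b a z))"
    using hcomp_cons2[of "(a,x)" q qs] pq fq by simp
  ultimately have "deriv (hcomp R ((a, x) # ps)) x = d * deriv (htrans R b a) x"
    using DERIV_imp_deriv DERIV_imp_deriv[OF D] ps(1) by metis
  moreover have "(a, x) # ps \<noteq> [] \<and> set (map fst ((a, x) # ps)) \<subseteq> I \<and> fst (hd ((a, x) # ps)) = a \<and>
      x \<in> cdom R ((a, x) # ps) \<and> length ((a, x) # ps) \<le> Suc (Suc n)"
    using I ps cd by simp
  ultimately show ?thesis unfolding Tset_def by (intro CollectI exI[of _ "(a, x) # ps"]) simp
qed

lemma mu_ge1: "a \<in> I \<Longrightarrow> -1 < u \<Longrightarrow> u < 1 \<Longrightarrow> 1 \<le> mu I R n (a, u)"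
  using mu_T T_one T_bdd by (metis bdd_aboveI cSup_upper)

lemma mu_le: "a \<in> I \<Longrightarrow> -1 < u \<Longrightarrow> u < 1 \<Longrightarrow> d \<in> Tset n a u \<Longrightarrow> d \<le> mu I R n (a, u)"
  using mu_T T_bdd by (metis bdd_aboveI cSup_upper)

lemma mu_step:
  assumes I: "a \<in> I" "b \<in> I" and Rxy: "R a x b y"
  shows "deriv (htrans R b a) x * mu I R n (b, y) \<le> mu I R (Suc n) (a, x)"
proof -
  have xr: "-1 < x" "x < 1" using rng[OF I(1) Rxy] by auto
  have yr: "-1 < y" "y < 1" using rng[OF I(2) sym[OF Rxy]] by auto
  have hp: "0 < deriv (htrans R b a) x"
    using hder[OF I tdom_I[OF I(1) Rxy]] C1 by (smt (verit) divide_pos_pos)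
  have "Sup (Tset n b y) \<le> mu I R (Suc n) (a, x) / deriv (htrans R b a) x"
  proof (rule cSup_least)
    show "Tset n b y \<noteq> {}" using T_one[OF I(2) yr] by blast
    fix d assume "d \<in> Tset n b y"
    then have "d * deriv (htrans R b a) x \<le> mu I R (Suc n) (a, x)"
      using mu_le[OF I(1) xr T_prepend[OF I Rxy]] by blast
    then show "d \<le> mu I R (Suc n) (a, x) / deriv (htrans R b a) x"
      using hp by (simp add: pos_le_divide_eq)
  qed
  then show ?thesis using mu_T[OF I(2) yr] hp by (simp add: pos_le_divide_eq mult.commute)
qed

lemma mu_step2:
  assumes I: "a \<in> I" "b \<in> I" and Rxy: "R a x b y"
  shows "mu I R n (a, x) \<le> deriv (htrans R b a) x * mu I R (Suc n) (b, y)"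
proof -
  have hp: "0 < deriv (htrans R b a) x"
    using hder[OF I tdom_I[OF I(1) Rxy]] C1 by (smt (verit) divide_pos_pos)
  have s: "deriv (htrans R a b) y * mu I R n (a, x) \<le> mu I R (Suc n) (b, y)"
    using mu_step[OF I(2,1) sym[OF Rxy]] .
  have inv: "deriv (htrans R a b) y * deriv (htrans R b a) x = 1" using inv_deriv[OF I Rxy] .
  have "mu I R n (a, x) = deriv (htrans R b a) x * (deriv (htrans R a b) y * mu I R n (a, x))"
    using inv by (simp add: algebra_simps)
  also have "\<dots> \<le> deriv (htrans R b a) x * mu I R (Suc n) (b, y)"
    using s hp by simp
  finally show ?thesis .
qed

end

lemma series_part:
  fixes A B :: "nat \<Rightarrow> real" and h \<epsilon> :: real
  assumes eps: "\<epsilon> > 0" and h: "h > 0"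
    and A1: "\<And>n. 1 \<le> A n" and B1: "\<And>n. 1 \<le> B n"
    and AB: "\<And>n. h * B n \<le> A (Suc n)" and BA: "\<And>n. A n \<le> h * B (Suc n)"
    and lam: "limsup (\<lambda>n. ereal (ln (A n) / real n)) = 0"
  shows "limsup (\<lambda>n. ereal (ln (B n) / real n)) = 0"
    and "summable (\<lambda>n. exp (- real n * \<epsilon>) * A n)"
    and "summable (\<lambda>n. exp (- real n * \<epsilon>) * B n)"
    and "exp (- \<epsilon>) * (\<Sum>n. exp (- real n * \<epsilon>) * A n) \<le> (\<Sum>n. exp (- real n * \<epsilon>) * B n) * h"
    and "(\<Sum>n. exp (- real n * \<epsilon>) * B n) * h \<le> exp \<epsilon> * (\<Sum>n. exp (- real n * \<epsilon>) * A n)"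
proof -
  define E where "E n = exp (- real n * \<epsilon>)" for n
  have Epos: "E n > 0" for n unfolding E_def by simp
  have ES: "E (Suc n) = exp (- \<epsilon>) * E n" for n
    unfolding E_def by (simp add: algebra_simps exp_add[symmetric])
  have Apos: "A n > 0" for n using A1[of n] by simp
  have Bpos: "B n > 0" for n using B1[of n] by simp
  have ev: "eventually (\<lambda>n. ereal (ln (A n) / real n) < ereal (\<epsilon>/2)) sequentially"
    using Limsup_lessD[where f="\<lambda>n. ereal (ln (A n) / real n)" and y="ereal (\<epsilon>/2)" and F=sequentially] lam eps
    by simp
  have ev2: "eventually (\<lambda>n. norm (E n * A n) \<le> exp (- \<epsilon>/2) ^ n) sequentially"
    using ev eventually_ge_at_top[of "1::nat"]
  proof eventually_elim
    case (elim n)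
    have "ln (A n) < \<epsilon>/2 * real n" using elim by (simp add: divide_less_eq)
    hence "A n < exp (\<epsilon>/2 * real n)" using Apos[of n] by (metis exp_less_mono exp_ln)
    hence "E n * A n \<le> E n * exp (\<epsilon>/2 * real n)" using Epos[of n] by simp
    also have "\<dots> = exp (- \<epsilon>/2) ^ n" unfolding E_def
      by (simp add: exp_add[symmetric] exp_of_nat_mult[symmetric] algebra_simps)
    finally show ?case using Epos[of n] Apos[of n] by simp
  qed
  have "summable (\<lambda>n. exp (- \<epsilon>/2) ^ n)" using eps by (intro summable_geometric) simp
  hence sA': "summable (\<lambda>n. E n * A n)" by (rule summable_comparison_test_ev[OF ev2])
  then show sA: "summable (\<lambda>n. exp (- real n * \<epsilon>) * A n)" unfolding E_def .
  have sAS: "summable (\<lambda>n. E (Suc n) * A (Suc n))" using sA' by (subst summable_Suc_iff)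
  have sB': "summable (\<lambda>n. E n * B n)"
  proof (rule summable_comparison_test_ev[of _ "\<lambda>n. (exp \<epsilon> / h) * (E (Suc n) * A (Suc n))"])
    show "summable (\<lambda>n. (exp \<epsilon> / h) * (E (Suc n) * A (Suc n)))" using sAS by (rule summable_mult)
    show "eventually (\<lambda>n. norm (E n * B n) \<le> (exp \<epsilon> / h) * (E (Suc n) * A (Suc n))) sequentially"
    proof (intro always_eventually allI)
      fix n
      have "B n \<le> A (Suc n) / h" using AB[of n] h by (simp add: pos_le_divide_eq mult.commute)
      hence "E n * B n \<le> E n * (A (Suc n) / h)" using Epos[of n] by (intro mult_left_mono) auto
      also have "\<dots> = (exp \<epsilon> / h) * (E (Suc n) * A (Suc n))"
        using ES[of n] by (simp add: exp_minus field_simps)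
      finally show "norm (E n * B n) \<le> (exp \<epsilon> / h) * (E (Suc n) * A (Suc n))"
        using Epos[of n] Bpos[of n] by simp
    qed
  qed
  then show sB: "summable (\<lambda>n. exp (- real n * \<epsilon>) * B n)" unfolding E_def .
  have sBS: "summable (\<lambda>n. E (Suc n) * B (Suc n))" using sB' by (subst summable_Suc_iff)
  show "limsup (\<lambda>n. ereal (ln (B n) / real n)) = 0"
  proof (rule antisym)
    show "limsup (\<lambda>n. ereal (ln (B n) / real n)) \<le> 0"
    proof (rule ereal_le_epsilon2)
      fix e :: real assume e: "0 < e"
      have "eventually (\<lambda>n. ereal (ln (A n) / real n) < ereal (e/2)) sequentially"
        using Limsup_lessD[where f="\<lambda>n. ereal (ln (A n) / real n)" and y="ereal (e/2)" and F=sequentially] lam e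
        by simp
      then obtain N where N: "\<And>n. n \<ge> N \<Longrightarrow> ln (A n) / real n < e/2"
        unfolding eventually_sequentially by auto
      obtain K :: nat where K: "(e/2 - ln h) / (e/2) \<le> real K" using real_arch_simple by blast
      have "eventually (\<lambda>n. ereal (ln (B n) / real n) \<le> ereal e) sequentially"
        unfolding eventually_sequentially
      proof (intro exI[of _ "max (max N K) 1"] allI impI)
        fix n assume n: "max (max N K) 1 \<le> n"
        have "ln (A (Suc n)) / real (Suc n) < e/2" using N[of "Suc n"] n by simp
        hence lA: "ln (A (Suc n)) < e/2 * real (Suc n)" by (simp add: divide_less_eq)
        have "ln (h * B n) \<le> ln (A (Suc n))" using AB[of n] h Bpos[of n] by (intro ln_mono) auto
        hence "ln h + ln (B n) \<le> ln (A (Suc n))" using h Bpos[of n] by (simp add: ln_mult)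
        moreover have "e/2 - ln h \<le> e/2 * real n"
        proof -
          have "(e/2 - ln h) / (e/2) \<le> real n" using K n by linarith
          thus ?thesis using e by (simp add: divide_le_eq mult.commute)
        qed
        moreover have "e/2 * real (Suc n) = e/2 + e/2 * real n" by (simp add: algebra_simps)
        ultimately have "ln (B n) \<le> e * real n" using lA by linarith
        moreover have "real n > 0" using n by simp
        ultimately show "ereal (ln (B n) / real n) \<le> ereal e" by (simp add: divide_le_eq)
      qed
      hence "limsup (\<lambda>n. ereal (ln (B n) / real n)) \<le> ereal e" by (rule Limsup_bounded)
      thus "limsup (\<lambda>n. ereal (ln (B n) / real n)) \<le> 0 + ereal e" by simp
    qed
    show "0 \<le> limsup (\<lambda>n. ereal (ln (B n) / real n))"
    proof (rule le_Limsup)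
      show "sequentially \<noteq> bot" by simp
      show "\<forall>\<^sub>F n in sequentially. 0 \<le> ereal (ln (B n) / real n)"
        using B1 by (intro always_eventually allI) simp
    qed
  qed
  have eqA: "(\<lambda>n. E n * A (Suc n)) = (\<lambda>n. exp \<epsilon> * (E (Suc n) * A (Suc n)))"
    by (rule ext) (simp add: ES exp_minus field_simps)
  have eqB: "(\<lambda>n. h * (E n * B (Suc n))) = (\<lambda>n. h * exp \<epsilon> * (E (Suc n) * B (Suc n)))"
    by (rule ext) (simp add: ES exp_minus field_simps)
  have "(\<Sum>n. E n * B n) * h = (\<Sum>n. E n * B n * h)" using sB' by (rule suminf_mult2)
  also have "\<dots> \<le> (\<Sum>n. E n * A (Suc n))"
  proof (rule suminf_le)
    show "E n * B n * h \<le> E n * A (Suc n)" for n using AB[of n] Epos[of n] by (simp add: mult_ac)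
    show "summable (\<lambda>n. E n * B n * h)" using sB' by (rule summable_mult2)
    show "summable (\<lambda>n. E n * A (Suc n))"
      using summable_mult[OF sAS, of "exp \<epsilon>"] eqA by simp
  qed
  also have "\<dots> = exp \<epsilon> * (\<Sum>n. E (Suc n) * A (Suc n))"
    using suminf_mult[OF sAS, of "exp \<epsilon>"] eqA by simp
  also have "\<dots> = exp \<epsilon> * ((\<Sum>n. E n * A n) - E 0 * A 0)"
    using suminf_split_head[OF sA'] by simp
  also have "\<dots> \<le> exp \<epsilon> * (\<Sum>n. E n * A n)"
    using Epos[of 0] Apos[of 0] by (simp add: mult_left_mono)
  finally show "(\<Sum>n. exp (- real n * \<epsilon>) * B n) * h \<le> exp \<epsilon> * (\<Sum>n. exp (- real n * \<epsilon>) * A n)"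
    unfolding E_def .
  have "(\<Sum>n. E n * A n) \<le> (\<Sum>n. h * (E n * B (Suc n)))"
  proof (rule suminf_le)
    show "E n * A n \<le> h * (E n * B (Suc n))" for n using BA[of n] Epos[of n]
      by (metis mult.left_commute mult_le_cancel_left_pos)
    show "summable (\<lambda>n. E n * A n)" by (rule sA')
    show "summable (\<lambda>n. h * (E n * B (Suc n)))"
      using summable_mult[OF sBS, of "h * exp \<epsilon>"] eqB by simp
  qed
  also have "\<dots> = h * exp \<epsilon> * (\<Sum>n. E (Suc n) * B (Suc n))"
    using suminf_mult[OF sBS, of "h * exp \<epsilon>"] eqB by simp
  also have "\<dots> = h * exp \<epsilon> * ((\<Sum>n. E n * B n) - E 0 * B 0)"
    using suminf_split_head[OF sB'] by simp
  also have "\<dots> \<le> h * exp \<epsilon> * (\<Sum>n. E n * B n)"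
    using Epos[of 0] Bpos[of 0] h by (simp add: mult_left_mono)
  finally have "exp (- \<epsilon>) * (\<Sum>n. E n * A n) \<le> exp (- \<epsilon>) * (h * exp \<epsilon> * (\<Sum>n. E n * B n))"
    by (simp add: mult_left_mono)
  also have "\<dots> = (\<Sum>n. E n * B n) * h" by (simp add: exp_minus field_simps)
  finally show "exp (- \<epsilon>) * (\<Sum>n. exp (- real n * \<epsilon>) * A n) \<le> (\<Sum>n. exp (- real n * \<epsilon>) * B n) * h"
    unfolding E_def .
qed

theorem lemma4p5:
  fixes M :: "'m set" and I :: "'i set" and U :: "'i \<Rightarrow> 'm set"
    and \<phi> :: "'i \<Rightarrow> 'm \<Rightarrow> (real^'n) \<times> real"
    and \<epsilon> :: real and \<alpha> \<beta> :: 'i and x y :: real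
  assumes atlas: "regular_foliated_atlas M I U \<phi>"
    and eps: "\<epsilon> > 0"
    and alpha: "\<alpha> \<in> I" and x: "-1 < x" "x < 1"
    and lam: "lambda_star I (plaque_meets U \<phi>) (\<alpha>, x) = 0"
    and Q: "plaque_chain I (plaque_meets U \<phi>) [(\<alpha>, x), (\<beta>, y)]"
  shows "exp (- \<epsilon>) * g_eps I (plaque_meets U \<phi>) \<epsilon> (\<alpha>, x)
           \<le> g_eps I (plaque_meets U \<phi>) \<epsilon> (\<beta>, y) * deriv (hcomp (plaque_meets U \<phi>) [(\<alpha>, x), (\<beta>, y)]) x
         \<and> g_eps I (plaque_meets U \<phi>) \<epsilon> (\<beta>, y) * deriv (hcomp (plaque_meets U \<phi>) [(\<alpha>, x), (\<beta>, y)]) x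
           \<le> exp \<epsilon> * g_eps I (plaque_meets U \<phi>) \<epsilon> (\<alpha>, x)"
proof -
  let ?R = "plaque_meets U \<phi>"
  from atlas obtain C where C: "C > 0" and CD: "\<forall>a\<in>I. \<forall>b\<in>I. open (tdom ?R b a) \<and>
        (\<exists>h'. continuous_on (tdom ?R b a) h' \<and>
           (\<forall>x\<in>tdom ?R b a. (htrans ?R b a has_real_derivative h' x) (at x) \<and> 1 / C \<le> h' x \<and> h' x \<le> C))"
    unfolding regular_foliated_atlas_def by blast
  have bij: "\<And>a. a \<in> I \<Longrightarrow> bij_betw (\<phi> a) (U a) (cube \<times> {-1<..<1})"
    using atlas unfolding regular_foliated_atlas_def by blast
  have regA: "\<forall>a\<in>I. \<forall>b\<in>I. \<forall>x y y'. ?R a x b y \<longrightarrow> ?R a x b y' \<longrightarrow> y = y'"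
    using atlas unfolding regular_foliated_atlas_def by blast
  interpret cs: csys I ?R "max C 1"
  proof
    fix a u b v assume a: "a \<in> I" and r: "?R a u b v"
    then obtain p where p: "p \<in> plaque U \<phi> a u" unfolding plaque_meets_def by blast
    hence "p \<in> U a" "snd (\<phi> a p) = u" unfolding plaque_def by auto
    hence "u \<in> {-1<..<1}" using bij_betwE[OF bij[OF a]] by force
    then show "-1 < u \<and> u < 1" by simp
  next
    fix a u b v assume "?R a u b v" then show "?R b v a u" unfolding plaque_meets_def by blast
  next
    fix a b x y y' assume "a \<in> I" "b \<in> I" "?R a x b y" "?R a x b y'"
    then show "y = y'" using regA by blast
  next
    show "max C 1 \<ge> 1" by simp
  next
    fix a b assume "a \<in> I" "b \<in> I" then show "open (tdom ?R b a)" using CD by blast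
  next
    fix a b x assume ab: "a \<in> I" "b \<in> I" and xd: "x \<in> tdom ?R b a"
    obtain h' where h': "\<forall>x\<in>tdom ?R b a. (htrans ?R b a has_real_derivative h' x) (at x) \<and> 1 / C \<le> h' x \<and> h' x \<le> C"
      using CD ab by blast
    have "1 / max C 1 \<le> 1 / C" using C by (simp add: frac_le)
    then show "\<exists>D. (htrans ?R b a has_real_derivative D) (at x) \<and> 1 / max C 1 \<le> D \<and> D \<le> max C 1"
      using h' xd by (intro exI[of _ "h' x"]) force
  qed
  have beta: "\<beta> \<in> I" and y: "-1 < y" "y < 1" and Rxy: "?R \<alpha> x \<beta> y"
    using Q unfolding plaque_chain_def by (auto dest: spec[of _ 0])
  have hc: "hcomp ?R [(\<alpha>, x), (\<beta>, y)] = htrans ?R \<beta> \<alpha>" by (rule ext) simp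
  define h where "h = deriv (htrans ?R \<beta> \<alpha>) x"
  have hp: "0 < h" unfolding h_def
    using cs.hder[OF alpha beta cs.tdom_I[OF alpha Rxy]]
    by (smt (verit) divide_pos_pos max.cobounded2)
  define A where "A n = mu I ?R n (\<alpha>, x)" for n
  define B where "B n = mu I ?R n (\<beta>, y)" for n
  have A1: "1 \<le> A n" for n unfolding A_def using cs.mu_ge1[OF alpha x] .
  have B1: "1 \<le> B n" for n unfolding B_def using cs.mu_ge1[OF beta y] .
  have AB: "h * B n \<le> A (Suc n)" for n unfolding A_def B_def h_def using cs.mu_step[OF alpha beta Rxy] .
  have BA: "A n \<le> h * B (Suc n)" for n unfolding A_def B_def h_def using cs.mu_step2[OF alpha beta Rxy] .
  have lamA: "limsup (\<lambda>n. ereal (ln (A n) / real n)) = 0" using lam unfolding lambda_star_def A_def .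
  note sp = series_part[OF eps hp A1 B1 AB BA lamA]
  have lamB: "lambda_star I ?R (\<beta>, y) = 0" using sp(1) unfolding lambda_star_def B_def .
  have gA: "g_eps I ?R \<epsilon> (\<alpha>, x) = (\<Sum>n. exp (- real n * \<epsilon>) * A n)"
    using lam unfolding g_eps_def A_def by simp
  have gB: "g_eps I ?R \<epsilon> (\<beta>, y) = (\<Sum>n. exp (- real n * \<epsilon>) * B n)"
    using lamB unfolding g_eps_def B_def by simp
  show ?thesis unfolding hc gA gB h_def[symmetric] using sp(4,5) by simp
qed

end
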